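(* Let $u\in L^0(\mathcal{F})$ be such that $E^{\mathcal{A}}M_u$ is bounded on $L^2(\mathcal{F})$, and let $A\in\mathcal{F}$. Then the closed subspace $L^2(A)=\{f\in L^2(\mathcal{F}): f=0 \text{ a.e. on } X\setminus A\}$ reduces $E^{\mathcal{A}}M_u$ if and only if $E^{\mathcal{A}}(\chi_A)=\chi_A$ a.e. on $S(E^{\mathcal{A}}(|u|^2))$.
   Context: $(X,\mathcal{F},\mu)$ is a complete $\sigma$-finite measure space and $\mathcal{A}\subseteq\mathcal{F}$ is a $\sigma$-subalgebra such that $(X,\mathcal{A},\mu|_{\mathcal{A}})$ is $\sigma$-finite. $E^{\mathcal{A}}$ is the conditional expectation with respect to $\mathcal{A}$: for $f\ge 0$ measurable or $f\in L^2(\mathcal{F})$, $E^{\mathcal{A}}f$ is the unique $\mathcal{A}$-measurable function with $\int_B f\,d\mu=\int_B E^{\mathcal{A}}f\,d\mu$ for all $B\in\mathcal{A}$. It is assumed that $E^{\mathcal{A}}(|u|)$ is a.e. finite. $E^{\mathcal{A}}M_u$ denotes the operator $f\mapsto E^{\mathcal{A}}(uf)$; when bounded on $L^2(\mathcal{F})$ its adjoint is $M_{\bar u}E^{\mathcal{A}}$. For a measurable function $g$, $S(g)=\{x: g(x)\neq 0\}$ is its support; $\chi_A$ is the indicator of $A$. A closed subspace $M$ reduces a bounded operator $T$ if $TM\subseteq M$ and $T^*M\subseteq M$. All (in)equalities are up to $\mu$-null sets. *)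

theory Defs
  imports "HOL-Probability.Probability"
begin

definition cond_exp_c :: "'a measure \<Rightarrow> 'a measure \<Rightarrow> ('a \<Rightarrow> complex) \<Rightarrow> 'a \<Rightarrow> complex" where
  "cond_exp_c M F f = (\<lambda>x. complex_of_real (real_cond_exp M F (\<lambda>y. Re (f y)) x)
                         + \<i> * complex_of_real (real_cond_exp M F (\<lambda>y. Im (f y)) x))"

definition EM :: "'a measure \<Rightarrow> 'a measure \<Rightarrow> ('a \<Rightarrow> complex) \<Rightarrow> ('a \<Rightarrow> complex) \<Rightarrow> 'a \<Rightarrow> complex" where
  "EM M F u f = cond_exp_c M F (\<lambda>x. u x * f x)"

text \<open>Complex L^2(M), as a set of (representative) functions.\<close>
definition L2 :: "'a measure \<Rightarrow> ('a \<Rightarrow> complex) set" where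
  "L2 M = {f. f \<in> borel_measurable M \<and> integrable M (\<lambda>x. (cmod (f x))\<^sup>2)}"

definition inner_L2 :: "'a measure \<Rightarrow> ('a \<Rightarrow> complex) \<Rightarrow> ('a \<Rightarrow> complex) \<Rightarrow> complex" where
  "inner_L2 M f g = (\<integral>x. f x * cnj (g x) \<partial>M)"

definition norm2_L2 :: "'a measure \<Rightarrow> ('a \<Rightarrow> complex) \<Rightarrow> real" where
  "norm2_L2 M f = (\<integral>x. (cmod (f x))\<^sup>2 \<partial>M)"

definition bounded_on_L2 :: "'a measure \<Rightarrow> (('a \<Rightarrow> complex) \<Rightarrow> ('a \<Rightarrow> complex)) \<Rightarrow> bool" where
  "bounded_on_L2 M T \<longleftrightarrow> (\<exists>C. \<forall>f\<in>L2 M. T f \<in> L2 M \<and> norm2_L2 M (T f) \<le> C * norm2_L2 M f)"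

definition L2_on :: "'a measure \<Rightarrow> 'a set \<Rightarrow> ('a \<Rightarrow> complex) set" where
  "L2_on M A = {f \<in> L2 M. AE x in M. x \<notin> A \<longrightarrow> f x = 0}"

text \<open>A closed subspace S reduces the bounded operator T: T S \<subseteq> S and T* S \<subseteq> S.
  The adjoint T* g is (up to a.e. equality) the unique h in L^2 with
  <T f, g> = <f, h> for all f in L^2; so T* g \<in> S means such an h can be found in S.\<close>
definition reduces :: "'a measure \<Rightarrow> ('a \<Rightarrow> complex) set \<Rightarrow> (('a \<Rightarrow> complex) \<Rightarrow> ('a \<Rightarrow> complex)) \<Rightarrow> bool" where
  "reduces M S T \<longleftrightarrow>
     (\<forall>f\<in>S. T f \<in> S) \<and>
     (\<forall>g\<in>S. \<exists>h\<in>S. \<forall>f\<in>L2 M. inner_L2 M (T f) g = inner_L2 M f h)"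

end

theory Submission
  imports Defs
begin

lemma cnj_meas[measurable (raw)]:
  "f \<in> borel_measurable M \<Longrightarrow> (\<lambda>x. cnj (f x)) \<in> borel_measurable M"
  by (rule borel_measurable_continuous_on) (auto intro: continuous_intros)

lemma cond_exp_c_meas[measurable]: "cond_exp_c M F f \<in> borel_measurable M"
  unfolding cond_exp_c_def by measurable

lemma cond_exp_c_measF[measurable]: "cond_exp_c M F f \<in> borel_measurable F"
  unfolding cond_exp_c_def by measurable

lemma EM_meas[measurable]: "EM M F u f \<in> borel_measurable M"
  unfolding EM_def by measurable

context sigma_finite_subalgebra
begin

lemma subF: "sets F \<subseteq> sets M" and spF: "space F = space M"
  using subalg by (auto simp: subalgebra_def)

lemma setF_M: "D \<in> sets F \<Longrightarrow> D \<in> sets M" using subF by auto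

lemma exhaust:
  obtains B :: "nat \<Rightarrow> 'a set" where "\<And>k. B k \<in> sets F" "\<And>k. emeasure M (B k) < \<infinity>"
    "(\<Union>k. B k) = space M"
proof -
  obtain A :: "nat \<Rightarrow> 'a set" where A: "range A \<subseteq> sets (restr_to_subalg M F)"
    "(\<Union>i. A i) = space (restr_to_subalg M F)" "\<And>i. emeasure (restr_to_subalg M F) (A i) \<noteq> \<infinity>"
    using sigma_finite_measure.sigma_finite[OF sigma_fin_subalg] by metis
  have 1: "\<And>k. A k \<in> sets F" using A(1) sets_restr_to_subalg[OF subalg] by auto
  moreover have "\<And>k. emeasure M (A k) < \<infinity>"
    using A(3) emeasure_restr_to_subalg[OF subalg 1] by (simp add: top.not_eq_extremum)
  moreover have "(\<Union>k. A k) = space M" using A(2) space_restr_to_subalg by simp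
  ultimately show ?thesis using that by blast
qed

lemma AE_exhaust:
  fixes B :: "nat \<Rightarrow> 'a set"
  assumes "\<And>k. B k \<in> sets F" "(\<Union>k. B k) = space M"
    and "\<And>k. AE x in M. x \<in> B k \<longrightarrow> P x"
  shows "AE x in M. P x"
proof -
  have "AE x in M. \<forall>k. x \<in> B k \<longrightarrow> P x" by (rule AE_all_countable[THEN iffD2]) (use assms(3) in blast)
  with AE_space show ?thesis
  proof eventually_elim
    case (elim x) then show ?case using assms(2) by blast
  qed
qed

lemma E_const: "AE x in M. nn_cond_exp M F (\<lambda>_. c) x = c"
  using nn_cond_exp_F_meas[of "\<lambda>_. c"] by auto

lemma E_ae0:
  assumes [measurable]: "\<psi> \<in> borel_measurable M" and "AE x in M. \<psi> x = 0"
  shows "AE x in M. nn_cond_exp M F \<psi> x = 0"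
proof -
  have "AE x in M. nn_cond_exp M F \<psi> x = nn_cond_exp M F (\<lambda>_. 0) x"
    by (rule nn_cond_exp_cong) (use assms in auto)
  with E_const[of 0] show ?thesis by auto
qed

lemma E_ind:
  assumes "D \<in> sets F" and [measurable]: "\<psi> \<in> borel_measurable M"
  shows "AE x in M. nn_cond_exp M F (\<lambda>y. indicator D y * \<psi> y) x = indicator D x * nn_cond_exp M F \<psi> x"
proof -
  have "(\<lambda>y. indicator D y :: ennreal) \<in> borel_measurable F" using assms(1) by measurable
  from nn_cond_exp_prod[OF this assms(2)] show ?thesis by auto
qed

lemma E_int_ind:
  assumes "D \<in> sets F" and [measurable]: "\<psi> \<in> borel_measurable M"
  shows "(\<integral>\<^sup>+x. indicator D x * nn_cond_exp M F \<psi> x \<partial>M) = (\<integral>\<^sup>+x. indicator D x * \<psi> x \<partial>M)"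
proof -
  have "(\<lambda>y. indicator D y :: ennreal) \<in> borel_measurable F" using assms(1) by measurable
  from nn_cond_exp_intg[OF this assms(2)] show ?thesis .
qed

end

context sigma_finite_subalgebra
begin

lemma T0:
  fixes a b :: "'a \<Rightarrow> real"
  assumes [measurable]: "a \<in> borel_measurable M" "b \<in> borel_measurable F"
    and nn: "\<And>x. 0 \<le> a x" "\<And>x. 0 \<le> b x"
    and int: "integrable M (\<lambda>x. a x * b x)"
  shows "integrable M (\<lambda>x. enn2real (nn_cond_exp M F (\<lambda>y. ennreal (a y)) x) * b x)"
    and "(\<integral>x. enn2real (nn_cond_exp M F (\<lambda>y. ennreal (a y)) x) * b x \<partial>M) = (\<integral>x. a x * b x \<partial>M)"
proof -
  have bM[measurable]: "b \<in> borel_measurable M" using measurable_from_subalg[OF subalg assms(2)] .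
  let ?e = "nn_cond_exp M F (\<lambda>y. ennreal (a y))"
  have 1: "(\<integral>\<^sup>+x. ennreal (b x) * ?e x \<partial>M) = (\<integral>\<^sup>+x. ennreal (b x) * ennreal (a x) \<partial>M)"
    by (rule nn_cond_exp_intg) auto
  have 2: "(\<integral>\<^sup>+x. ennreal (a x * b x) \<partial>M) = (\<integral>\<^sup>+x. ennreal (b x) * ennreal (a x) \<partial>M)"
    by (rule nn_integral_cong) (simp add: ennreal_mult nn mult.commute)
  have fin: "(\<integral>\<^sup>+x. ennreal (a x * b x) \<partial>M) < \<infinity>"
    using int by (simp add: integrable_iff_bounded nn)
  have "AE x in M. ennreal (b x) * ?e x \<noteq> \<infinity>"
    by (rule nn_integral_PInf_AE) (use 1 2 fin in auto)
  then have 3: "AE x in M. ennreal (enn2real (?e x) * b x) = ennreal (b x) * ?e x"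
  proof eventually_elim
    case (elim x)
    show ?case
    proof (cases "b x = 0")
      case False
      then have "?e x \<noteq> \<infinity>" using elim nn(2)[of x] by (auto simp: ennreal_mult_eq_top_iff)
      then show ?thesis by (simp add: ennreal_mult'' nn mult.commute ennreal_enn2real_if)
    qed simp
  qed
  have 4: "(\<integral>\<^sup>+x. ennreal (enn2real (?e x) * b x) \<partial>M) = (\<integral>\<^sup>+x. ennreal (a x * b x) \<partial>M)"
    using 1 2 3 by (simp add: nn_integral_cong_AE)
  show i: "integrable M (\<lambda>x. enn2real (?e x) * b x)"
    by (rule integrableI_nonneg) (use 4 fin nn in auto)
  have "ennreal (\<integral>x. enn2real (?e x) * b x \<partial>M) = ennreal (\<integral>x. a x * b x \<partial>M)"
    using nn_integral_eq_integral[OF i] nn_integral_eq_integral[OF int] 4 nn by simp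
  moreover have "0 \<le> (\<integral>x. enn2real (?e x) * b x \<partial>M)" "0 \<le> (\<integral>x. a x * b x \<partial>M)"
    using nn by auto
  ultimately show "(\<integral>x. enn2real (?e x) * b x \<partial>M) = (\<integral>x. a x * b x \<partial>M)" by simp
qed

lemma tower:
  fixes \<phi> \<psi> :: "'a \<Rightarrow> real"
  assumes [measurable]: "\<phi> \<in> borel_measurable M" "\<psi> \<in> borel_measurable F"
    and int: "integrable M (\<lambda>x. \<phi> x * \<psi> x)"
  shows "integrable M (\<lambda>x. real_cond_exp M F \<phi> x * \<psi> x)"
    and "(\<integral>x. real_cond_exp M F \<phi> x * \<psi> x \<partial>M) = (\<integral>x. \<phi> x * \<psi> x \<partial>M)"
proof -
  have [measurable]: "\<psi> \<in> borel_measurable M" using measurable_from_subalg[OF subalg assms(2)] .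
  define a1 where "a1 = (\<lambda>x. max (\<phi> x) 0)"
  define a2 where "a2 = (\<lambda>x. max (- \<phi> x) 0)"
  define b1 where "b1 = (\<lambda>x. max (\<psi> x) 0)"
  define b2 where "b2 = (\<lambda>x. max (- \<psi> x) 0)"
  have m[measurable]: "a1 \<in> borel_measurable M" "a2 \<in> borel_measurable M"
     "b1 \<in> borel_measurable F" "b2 \<in> borel_measurable F"
    unfolding a1_def a2_def b1_def b2_def by measurable
  have [measurable]: "b1 \<in> borel_measurable M" "b2 \<in> borel_measurable M"
    using measurable_from_subalg[OF subalg m(3)] measurable_from_subalg[OF subalg m(4)] by auto
  have nn: "\<And>x. 0 \<le> a1 x" "\<And>x. 0 \<le> a2 x" "\<And>x. 0 \<le> b1 x" "\<And>x. 0 \<le> b2 x"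
    unfolding a1_def a2_def b1_def b2_def by auto
  have ph: "\<phi> x = a1 x - a2 x" "\<psi> x = b1 x - b2 x" for x
    unfolding a1_def a2_def b1_def b2_def by auto
  have ab: "\<bar>ai x * bj x\<bar> \<le> \<bar>\<phi> x * \<psi> x\<bar>" if "ai \<in> {a1, a2}" "bj \<in> {b1, b2}" for ai bj x
    using that unfolding a1_def a2_def b1_def b2_def abs_mult by (auto intro!: mult_mono)
  have ints: "integrable M (\<lambda>x. ai x * bj x)" if "ai \<in> {a1, a2}" "bj \<in> {b1, b2}" for ai bj
  proof (rule Bochner_Integration.integrable_bound[OF int])
    show "(\<lambda>x. ai x * bj x) \<in> borel_measurable M" using that by auto
    show "AE x in M. norm (ai x * bj x) \<le> norm (\<phi> x * \<psi> x)" using ab[OF that] by auto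
  qed
  have rce: "real_cond_exp M F \<phi> x = enn2real (nn_cond_exp M F (\<lambda>y. ennreal (a1 y)) x)
       - enn2real (nn_cond_exp M F (\<lambda>y. ennreal (a2 y)) x)" for x
    unfolding real_cond_exp_def a1_def a2_def ennreal_max_0' ..
  note t11 = T0[OF m(1) m(3) nn(1) nn(3) ints[of a1 b1]]
  note t12 = T0[OF m(1) m(4) nn(1) nn(4) ints[of a1 b2]]
  note t21 = T0[OF m(2) m(3) nn(2) nn(3) ints[of a2 b1]]
  note t22 = T0[OF m(2) m(4) nn(2) nn(4) ints[of a2 b2]]
  have eq1: "real_cond_exp M F \<phi> x * \<psi> x =
     (enn2real (nn_cond_exp M F (\<lambda>y. ennreal (a1 y)) x) * b1 x - enn2real (nn_cond_exp M F (\<lambda>y. ennreal (a1 y)) x) * b2 x)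
    - (enn2real (nn_cond_exp M F (\<lambda>y. ennreal (a2 y)) x) * b1 x - enn2real (nn_cond_exp M F (\<lambda>y. ennreal (a2 y)) x) * b2 x)" for x
    unfolding rce ph(2)[of x] by (simp add: algebra_simps)
  have eq2: "\<phi> x * \<psi> x = (a1 x * b1 x - a1 x * b2 x) - (a2 x * b1 x - a2 x * b2 x)" for x
    unfolding ph by (simp add: algebra_simps)
  show "integrable M (\<lambda>x. real_cond_exp M F \<phi> x * \<psi> x)"
    unfolding eq1 using t11(1) t12(1) t21(1) t22(1) by auto
  show "(\<integral>x. real_cond_exp M F \<phi> x * \<psi> x \<partial>M) = (\<integral>x. \<phi> x * \<psi> x \<partial>M)"
    unfolding eq1 eq2 using t11 t12 t21 t22 ints[of a1 b1] ints[of a1 b2] ints[of a2 b1] ints[of a2 b2]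
    by (simp add: Bochner_Integration.integral_diff)
qed

end

definition gtr :: "('a \<Rightarrow> complex) \<Rightarrow> nat \<Rightarrow> 'a \<Rightarrow> real" where
  "gtr u n x = (if cmod (u x) \<le> real n then (cmod (u x))\<^sup>2 else 0)"

definition ftr :: "('a \<Rightarrow> complex) \<Rightarrow> 'a set \<Rightarrow> nat \<Rightarrow> 'a \<Rightarrow> complex" where
  "ftr u H n x = indicator H x * (if cmod (u x) \<le> real n then cnj (u x) else 0)"

lemma gtr_nonneg: "0 \<le> gtr u n x" by (simp add: gtr_def)

lemma gtr_le: "gtr u n x \<le> real n * cmod (u x)"
  by (auto simp: gtr_def power2_eq_square intro: mult_right_mono)

lemma gtr_le2: "gtr u n x \<le> (real n)\<^sup>2"
  by (auto simp: gtr_def intro: power_mono)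

lemma gtr_meas[measurable]: assumes [measurable]: "u \<in> borel_measurable M" shows "gtr u n \<in> borel_measurable M"
  unfolding gtr_def by measurable

lemma ftr_meas[measurable]: assumes [measurable]: "u \<in> borel_measurable M" "H \<in> sets M" shows "ftr u H n \<in> borel_measurable M"
  unfolding ftr_def by measurable

lemma u_ftr: "u x * ftr u H n x = complex_of_real (indicator H x * gtr u n x)"
  by (simp add: ftr_def gtr_def indicator_def flip: complex_norm_square)

lemma ftr_norm: "(cmod (ftr u H n x))\<^sup>2 = indicator H x * gtr u n x"
  by (simp add: ftr_def gtr_def indicator_def norm_mult)

context sigma_finite_subalgebra
begin

lemma rce_nonneg:
  assumes [measurable]: "\<phi> \<in> borel_measurable M" and nn: "\<And>x. 0 \<le> \<phi> x"
  shows "AE x in M. real_cond_exp M F \<phi> x = enn2real (nn_cond_exp M F (\<lambda>y. ennreal (\<phi> y)) x)"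
proof -
  have "(\<lambda>y. ennreal (- \<phi> y)) = (\<lambda>y. 0)" using nn by (auto simp: ennreal_neg)
  then show ?thesis using E_const[of 0] unfolding real_cond_exp_def by auto
qed

lemma rce_zero: "AE x in M. real_cond_exp M F (\<lambda>_. 0) x = 0"
  using rce_nonneg[of "\<lambda>_. 0"] E_const[of 0] by auto

lemma Tcomp:
  assumes [measurable]: "u \<in> borel_measurable M" "H \<in> sets M"
    and B: "B \<in> sets F" "emeasure M B < \<infinity>"
  shows "ftr u (H \<inter> B) n \<in> L2 M"
    and "AE x in M. EM M F u (ftr u (H \<inter> B) n) x
           = complex_of_real (enn2real (nn_cond_exp M F (\<lambda>y. ennreal (indicator (H \<inter> B) y * gtr u n y)) x))"
proof -
  have [measurable]: "B \<in> sets M" using B setF_M by auto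
  have "integrable M (\<lambda>x. (real n)\<^sup>2 * indicator B x)"
    using integrable_real_indicator[of B M] B by auto
  then have "integrable M (\<lambda>x. (cmod (ftr u (H \<inter> B) n x))\<^sup>2)"
  proof (rule Bochner_Integration.integrable_bound)
    show "AE x in M. norm ((cmod (ftr u (H \<inter> B) n x))\<^sup>2) \<le> norm ((real n)\<^sup>2 * indicator B x)"
      unfolding ftr_norm by (auto simp: indicator_def abs_of_nonneg gtr_nonneg gtr_le2)
  qed measurable
  then show "ftr u (H \<inter> B) n \<in> L2 M" unfolding L2_def by auto
  have re: "(\<lambda>y. Re (u y * ftr u (H \<inter> B) n y)) = (\<lambda>y. indicator (H \<inter> B) y * gtr u n y)"
    and im: "(\<lambda>y. Im (u y * ftr u (H \<inter> B) n y)) = (\<lambda>y. 0)"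
    unfolding u_ftr by auto
  have 1: "AE x in M. real_cond_exp M F (\<lambda>y. indicator (H \<inter> B) y * gtr u n y) x
     = enn2real (nn_cond_exp M F (\<lambda>y. ennreal (indicator (H \<inter> B) y * gtr u n y)) x)"
    by (rule rce_nonneg) (auto simp: gtr_nonneg)
  show "AE x in M. EM M F u (ftr u (H \<inter> B) n) x
           = complex_of_real (enn2real (nn_cond_exp M F (\<lambda>y. ennreal (indicator (H \<inter> B) y * gtr u n y)) x))"
    using 1 rce_zero unfolding EM_def cond_exp_c_def re im by eventually_elim auto
qed

end

context sigma_finite_subalgebra
begin

lemma E_fin:
  assumes [measurable]: "u \<in> borel_measurable M" "\<psi> \<in> borel_measurable M"
    and fin: "AE x in M. nn_cond_exp M F (\<lambda>y. ennreal (cmod (u y))) x < \<infinity>"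
    and le: "\<And>x. \<psi> x \<le> ennreal c * ennreal (cmod (u x))"
  shows "AE x in M. nn_cond_exp M F \<psi> x < \<infinity>"
proof -
  have 1: "AE x in M. nn_cond_exp M F \<psi> x \<le> nn_cond_exp M F (\<lambda>y. ennreal c * ennreal (cmod (u y))) x"
    by (rule nn_cond_exp_mono) (auto simp: le)
  have 2: "AE x in M. ennreal c * nn_cond_exp M F (\<lambda>y. ennreal (cmod (u y))) x
      = nn_cond_exp M F (\<lambda>y. ennreal c * ennreal (cmod (u y))) x"
    by (rule nn_cond_exp_prod) auto
  from 1 2 fin show ?thesis
  proof eventually_elim
    case (elim x)
    have "ennreal c * nn_cond_exp M F (\<lambda>y. ennreal (cmod (u y))) x < \<top>"
      using elim(3) by (simp add: ennreal_mult_less_top)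
    then have "nn_cond_exp M F (\<lambda>y. ennreal c * ennreal (cmod (u y))) x < \<top>"
      using elim(2) by simp
    then show ?case using le_less_trans[OF elim(1)] by simp
  qed
qed

lemma Ebound:
  assumes [measurable]: "u \<in> borel_measurable M"
    and fin: "AE x in M. nn_cond_exp M F (\<lambda>y. ennreal (cmod (u y))) x < \<infinity>"
    and bd: "bounded_on_L2 M (EM M F u)"
  obtains K :: real where "0 \<le> K" "\<And>n. AE x in M. nn_cond_exp M F (\<lambda>y. ennreal (gtr u n y)) x \<le> ennreal K"
proof -
  obtain C where C: "\<forall>f\<in>L2 M. EM M F u f \<in> L2 M \<and> norm2_L2 M (EM M F u f) \<le> C * norm2_L2 M f"
    using bd unfolding bounded_on_L2_def by blast
  define K where "K = max C 0"
  have K0: "0 \<le> K" "C \<le> K" unfolding K_def by auto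
  obtain B :: "nat \<Rightarrow> 'a set" where B: "\<And>k. B k \<in> sets F" "\<And>k. emeasure M (B k) < \<infinity>" "(\<Union>k. B k) = space M"
    using exhaust by metis
  have "AE x in M. nn_cond_exp M F (\<lambda>y. ennreal (gtr u n y)) x \<le> ennreal K" for n
  proof (rule AE_exhaust[OF B(1) B(3)])
    fix k
    define e where "e = nn_cond_exp M F (\<lambda>y. ennreal (gtr u n y))"
    have [measurable]: "e \<in> borel_measurable F" "e \<in> borel_measurable M" unfolding e_def by auto
    define D where "D = B k \<inter> {x \<in> space M. ennreal K < e x \<and> e x < \<top>}"
    have "{x \<in> space F. ennreal K < e x \<and> e x < \<top>} \<in> sets F" by measurable
    then have DF: "D \<in> sets F" unfolding D_def using B(1) spF by auto
    then have DM[measurable]: "D \<in> sets M" using setF_M by auto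
    have DB: "D \<inter> B k = D" unfolding D_def by auto
    note Tc = Tcomp[OF assms(1) DM B(1)[of k] B(2)[of k], of n, unfolded DB]
    define f where "f = ftr u D n"
    have fL2: "f \<in> L2 M" using Tc(1) f_def by simp
    with C have Tf: "EM M F u f \<in> L2 M" "norm2_L2 M (EM M F u f) \<le> C * norm2_L2 M f" by auto
    define r where "r = (\<lambda>x. enn2real (e x))"
    have [measurable]: "r \<in> borel_measurable M" "r \<in> borel_measurable F" unfolding r_def by auto
    have fe: "(\<lambda>y. ennreal (indicator D y * gtr u n y)) = (\<lambda>y. indicator D y * ennreal (gtr u n y))"
      by (auto simp: indicator_def)
    have "AE x in M. nn_cond_exp M F (\<lambda>y. indicator D y * ennreal (gtr u n y)) x = indicator D x * e x"
      unfolding e_def by (rule E_ind[OF DF]) auto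
    with Tc(2) have ae1: "AE x in M. EM M F u f x = complex_of_real (indicator D x * r x)"
      unfolding f_def fe r_def by eventually_elim (auto simp: indicator_def)
    have intf: "integrable M (\<lambda>x. indicator D x * gtr u n x)"
      using fL2 unfolding L2_def f_def by (simp add: ftr_norm)
    have indF[measurable]: "(indicator D :: 'a \<Rightarrow> real) \<in> borel_measurable F" using DF by measurable
    note t0 = T0[of "gtr u n" "indicator D", OF gtr_meas[OF assms(1)] indF gtr_nonneg _]
    have intf': "integrable M (\<lambda>x. gtr u n x * indicator D x)" using intf by (simp add: mult.commute)
    have t0a: "integrable M (\<lambda>x. indicator D x * r x)" and
         t0b: "(\<integral>x. indicator D x * r x \<partial>M) = (\<integral>x. indicator D x * gtr u n x \<partial>M)"
      using t0[OF _ intf'] unfolding r_def e_def by (auto simp: mult.commute)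
    have int2: "integrable M (\<lambda>x. (indicator D x * r x)\<^sup>2)"
    proof -
      have i1: "integrable M (\<lambda>x. (cmod (EM M F u f x))\<^sup>2)" using Tf(1) unfolding L2_def by auto
      have ae2: "AE x in M. (cmod (EM M F u f x))\<^sup>2 = (indicator D x * r x)\<^sup>2"
        using ae1 by eventually_elim (simp del: of_real_mult)
      have m2: "(\<lambda>x. (indicator D x * r x)\<^sup>2) \<in> borel_measurable M" by measurable
      show ?thesis by (rule integrable_cong_AE_imp[OF i1 m2 ae2])
    qed
    have n1: "norm2_L2 M (EM M F u f) = (\<integral>x. (indicator D x * r x)\<^sup>2 \<partial>M)"
      unfolding norm2_L2_def using ae1 by (intro integral_cong_AE) (auto simp del: of_real_mult elim!: eventually_mono)
    have n2: "norm2_L2 M f = (\<integral>x. indicator D x * gtr u n x \<partial>M)"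
      by (simp only: norm2_L2_def f_def ftr_norm)
    have I0: "0 \<le> (\<integral>x. indicator D x * r x \<partial>M)" unfolding r_def by auto
    define q where "q = (\<lambda>x. (indicator D x * r x)\<^sup>2 - K * (indicator D x * r x))"
    have qint: "integrable M q" unfolding q_def using int2 t0a by auto
    have "(\<integral>x. q x \<partial>M) = (\<integral>x. (indicator D x * r x)\<^sup>2 \<partial>M) - K * (\<integral>x. indicator D x * r x \<partial>M)"
      unfolding q_def using int2 t0a by simp
    also have "\<dots> \<le> 0"
      using Tf(2) mult_right_mono[OF K0(2) I0] unfolding n1 n2 t0b[symmetric] by linarith
    finally have qle: "(\<integral>x. q x \<partial>M) \<le> 0" .
    have rD: "x \<in> D \<Longrightarrow> K < r x" for x
    proof -
      assume "x \<in> D"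
      then have 1: "ennreal K < e x" "e x < \<top>" unfolding D_def by auto
      then have "e x = ennreal (r x)" unfolding r_def by (simp add: ennreal_enn2real)
      moreover have "0 \<le> r x" unfolding r_def by simp
      ultimately show ?thesis using 1 ennreal_less_iff[OF K0(1)] by simp
    qed
    have qnn: "0 \<le> q x" for x
    proof (cases "x \<in> D")
      case True
      then have "K < r x" by (rule rD)
      then show ?thesis using True K0 unfolding q_def by (simp add: power2_eq_square)
    qed (simp add: q_def)
    have "0 \<le> (\<integral>x. q x \<partial>M)" by (rule integral_nonneg_AE) (use qnn in auto)
    with qle have "(\<integral>x. q x \<partial>M) = 0" by simp
    then have "AE x in M. q x = 0" using integral_nonneg_eq_0_iff_AE[OF qint] qnn by auto
    moreover have "AE x in M. e x < \<infinity>"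
    proof -
      have le: "\<And>x. ennreal (gtr u n x) \<le> ennreal (real n) * ennreal (cmod (u x))"
        by (subst ennreal_mult[symmetric]) (auto intro!: ennreal_leI gtr_le)
      have "(\<lambda>y. ennreal (gtr u n y)) \<in> borel_measurable M" by measurable
      from E_fin[OF assms(1) this fin le] show ?thesis unfolding e_def .
    qed
    ultimately show "AE x in M. x \<in> B k \<longrightarrow> e x \<le> ennreal K"
    proof eventually_elim
      case (elim x)
      show ?case
      proof
        assume xB: "x \<in> B k"
        show "e x \<le> ennreal K"
        proof (rule ccontr)
          assume "\<not> e x \<le> ennreal K"
          moreover have "x \<in> space M" using xB setF_M[OF B(1)[of k]] sets.sets_into_space by blast
          ultimately have "x \<in> D" using xB elim(2) unfolding D_def by (simp add: not_le)
          then have "K < r x" by (rule rD)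
          then have "0 < q x" using \<open>x \<in> D\<close> K0 unfolding q_def by (simp add: power2_eq_square)
          with elim show False by simp
        qed
      qed
    qed
  qed
  then show ?thesis using that K0 by auto
qed

end

lemma ennreal_amgm: "2 * t * a \<le> a * a + t * (t::ennreal)"
proof (cases "a = \<top> \<or> t = \<top>")
  case True
  then show ?thesis
    by (cases "t = 0"; cases "a = 0") (auto simp: ennreal_mult_eq_top_iff)
next
  case False
  then obtain x y where x: "a = ennreal x" "0 \<le> x" and y: "t = ennreal y" "0 \<le> y"
    by (metis enn2real_nonneg ennreal_enn2real_if)
  have "2 * y * x \<le> x * x + y * y" using sum_squares_bound[of y x] by (simp add: power2_eq_square)
  then have "ennreal (2 * y * x) \<le> ennreal (x * x + y * y)" by (rule ennreal_leI)
  then show ?thesis using x y by (simp add: ennreal_mult ennreal_plus[symmetric] mult.assoc)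
qed

lemma enn2real_sq_le: "ennreal ((enn2real e)\<^sup>2) \<le> e * e"
  by (cases "e = \<top>") (auto simp: power2_eq_square ennreal_mult ennreal_enn2real_if)

lemma gtr_mono: "n \<le> m \<Longrightarrow> gtr u n x \<le> gtr u m x"
  unfolding gtr_def by (auto simp: gtr_def)

lemma gtr_le_sq: "gtr u n x \<le> (cmod (u x))\<^sup>2" unfolding gtr_def by auto

lemma SUP_gtr: "(SUP n. ennreal (gtr u n x) * w) = ennreal ((cmod (u x))\<^sup>2) * w"
proof (rule antisym)
  show "(SUP n. ennreal (gtr u n x) * w) \<le> ennreal ((cmod (u x))\<^sup>2) * w"
    by (rule SUP_least) (auto intro!: mult_right_mono ennreal_leI gtr_le_sq)
  have "gtr u (nat \<lceil>cmod (u x)\<rceil>) x = (cmod (u x))\<^sup>2" unfolding gtr_def by (simp add: real_nat_ceiling_ge)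
  then show "ennreal ((cmod (u x))\<^sup>2) * w \<le> (SUP n. ennreal (gtr u n x) * w)"
    by (metis (mono_tags, lifting) SUP_upper UNIV_I)
qed

context sigma_finite_subalgebra
begin

lemma jensen:
  assumes [measurable]: "a \<in> borel_measurable M"
  shows "AE x in M. nn_cond_exp M F a x * nn_cond_exp M F a x \<le> nn_cond_exp M F (\<lambda>y. a y * a y) x"
proof -
  define e where "e = nn_cond_exp M F a"
  have [measurable]: "e \<in> borel_measurable F" "e \<in> borel_measurable M" unfolding e_def by auto
  define t where "t = (\<lambda>x. if e x = \<top> then 1 else e x)"
  have tF[measurable]: "t \<in> borel_measurable F" unfolding t_def by measurable
  have tM[measurable]: "t \<in> borel_measurable M" by (rule measurable_from_subalg[OF subalg tF])
  have 1: "AE x in M. nn_cond_exp M F (\<lambda>y. 2 * t y * a y) x \<le> nn_cond_exp M F (\<lambda>y. a y * a y + t y * t y) x"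
    by (rule nn_cond_exp_mono) (auto intro: ennreal_amgm)
  have 2: "AE x in M. (2 * t x) * e x = nn_cond_exp M F (\<lambda>y. 2 * t y * a y) x"
    unfolding e_def by (rule nn_cond_exp_prod) auto
  have 3: "AE x in M. nn_cond_exp M F (\<lambda>y. a y * a y) x + nn_cond_exp M F (\<lambda>y. t y * t y) x
     = nn_cond_exp M F (\<lambda>y. a y * a y + t y * t y) x"
    by (rule nn_cond_exp_sum) auto
  have 4: "AE x in M. t x * t x = nn_cond_exp M F (\<lambda>y. t y * t y) x"
    by (rule nn_cond_exp_F_meas) auto
  from 1 2 3 4 have "AE x in M. e x * e x \<le> nn_cond_exp M F (\<lambda>y. a y * a y) x"
  proof eventually_elim
    case (elim x)
    let ?s = "nn_cond_exp M F (\<lambda>y. a y * a y) x"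
    have A: "2 * t x * e x \<le> ?s + t x * t x" using elim by simp
    show ?case
    proof (cases "e x = \<top>")
      case True
      then have "t x = 1" unfolding t_def by simp
      with A True have "\<top> \<le> ?s + 1" by (simp add: ennreal_mult_eq_top_iff)
      then have "?s = \<top>" by (simp add: top_unique)
      then show ?thesis by simp
    next
      case False
      then have te: "t x = e x" unfolding t_def by simp
      have fin: "e x * e x \<noteq> \<top>" using False by (simp add: ennreal_mult_eq_top_iff)
      have "e x * e x + e x * e x \<le> ?s + e x * e x" using A te by (simp add: mult_2 distrib_right mult.assoc)
      then show ?thesis using fin by (simp add: add.commute[of "?s"] ennreal_add_left_cancel_le)
    qed
  qed
  then show ?thesis unfolding e_def .
qed

lemma u2int:
  assumes [measurable]: "u \<in> borel_measurable M" "w \<in> borel_measurable F"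
    and K: "\<And>n. AE x in M. nn_cond_exp M F (\<lambda>y. ennreal (gtr u n y)) x \<le> ennreal K"
  shows "(\<integral>\<^sup>+x. ennreal ((cmod (u x))\<^sup>2) * w x \<partial>M) \<le> ennreal K * (\<integral>\<^sup>+x. w x \<partial>M)"
proof -
  have wM[measurable]: "w \<in> borel_measurable M" by (rule measurable_from_subalg[OF subalg assms(2)])
  have "(\<integral>\<^sup>+x. ennreal ((cmod (u x))\<^sup>2) * w x \<partial>M) = (\<integral>\<^sup>+x. (SUP n. ennreal (gtr u n x) * w x) \<partial>M)"
    by (simp add: SUP_gtr)
  also have "\<dots> = (SUP n. \<integral>\<^sup>+x. ennreal (gtr u n x) * w x \<partial>M)"
  proof (rule nn_integral_monotone_convergence_SUP)
    show "incseq (\<lambda>n x. ennreal (gtr u n x) * w x)"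
      by (auto simp: incseq_def le_fun_def intro!: mult_right_mono ennreal_leI gtr_mono)
  qed auto
  also have "\<dots> \<le> ennreal K * (\<integral>\<^sup>+x. w x \<partial>M)"
  proof (rule SUP_least)
    fix n
    have "(\<integral>\<^sup>+x. ennreal (gtr u n x) * w x \<partial>M) = (\<integral>\<^sup>+x. w x * ennreal (gtr u n x) \<partial>M)"
      by (simp add: mult.commute)
    also have "\<dots> = (\<integral>\<^sup>+x. w x * nn_cond_exp M F (\<lambda>y. ennreal (gtr u n y)) x \<partial>M)"
      by (rule nn_cond_exp_intg[symmetric]) auto
    also have "\<dots> \<le> (\<integral>\<^sup>+x. ennreal K * w x \<partial>M)"
    proof (rule nn_integral_mono_AE)
      show "AE x in M. w x * nn_cond_exp M F (\<lambda>y. ennreal (gtr u n y)) x \<le> ennreal K * w x"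
        using K[of n]
      proof eventually_elim
        case (elim x)
        show ?case using mult_right_mono[OF elim, of "w x"] by (simp add: mult.commute)
      qed
    qed
    also have "\<dots> = ennreal K * (\<integral>\<^sup>+x. w x \<partial>M)" by (rule nn_integral_cmult) auto
    finally show "(\<integral>\<^sup>+x. ennreal (gtr u n x) * w x \<partial>M) \<le> ennreal K * (\<integral>\<^sup>+x. w x \<partial>M)" .
  qed
  finally show ?thesis .
qed

end

definition pp :: "('a \<Rightarrow> real) \<Rightarrow> 'a \<Rightarrow> ennreal" where "pp f = (\<lambda>y. ennreal (f y))"
definition nnp :: "('a \<Rightarrow> real) \<Rightarrow> 'a \<Rightarrow> ennreal" where "nnp f = (\<lambda>y. ennreal (- f y))"

lemma pp_meas[measurable]: "f \<in> borel_measurable M \<Longrightarrow> pp f \<in> borel_measurable M"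
  unfolding pp_def by measurable
lemma nnp_meas[measurable]: "f \<in> borel_measurable M \<Longrightarrow> nnp f \<in> borel_measurable M"
  unfolding nnp_def by measurable

lemma rce_pp: "real_cond_exp M F f x = enn2real (nn_cond_exp M F (pp f) x) - enn2real (nn_cond_exp M F (nnp f) x)"
  unfolding real_cond_exp_def pp_def nnp_def ..

lemma cond_exp_c_Re: "Re (cond_exp_c M F g x) = real_cond_exp M F (\<lambda>y. Re (g y)) x"
  and cond_exp_c_Im: "Im (cond_exp_c M F g x) = real_cond_exp M F (\<lambda>y. Im (g y)) x"
  unfolding cond_exp_c_def by simp_all

lemma sq_diff_le: "(p - q)\<^sup>2 \<le> 2 * (p\<^sup>2 + q\<^sup>2)" for p q :: real
  using sum_squares_bound[of p "-q"] by (simp add: power2_diff)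

lemma pp_sq: "pp f y * pp f y + nnp f y * nnp f y = ennreal ((f y)\<^sup>2)"
  unfolding pp_def nnp_def by (cases "0 \<le> f y") (auto simp: ennreal_neg power2_eq_square ennreal_mult[symmetric])

context sigma_finite_subalgebra
begin

lemma hL2:
  assumes [measurable]: "u \<in> borel_measurable M"
    and K: "\<And>n. AE x in M. nn_cond_exp M F (\<lambda>y. ennreal (gtr u n y)) x \<le> ennreal K"
    and g: "g \<in> L2 M"
  shows "(\<lambda>x. cnj (u x) * cond_exp_c M F g x) \<in> L2 M"
proof -
  have gm[measurable]: "g \<in> borel_measurable M" using g unfolding L2_def by auto
  have gi: "integrable M (\<lambda>x. (cmod (g x))\<^sup>2)" using g unfolding L2_def by auto
  define g1 where "g1 = (\<lambda>y. Re (g y))"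
  define g2 where "g2 = (\<lambda>y. Im (g y))"
  have [measurable]: "g1 \<in> borel_measurable M" "g2 \<in> borel_measurable M" unfolding g1_def g2_def by auto
  define e1 where "e1 = nn_cond_exp M F (pp g1)"
  define e2 where "e2 = nn_cond_exp M F (nnp g1)"
  define e3 where "e3 = nn_cond_exp M F (pp g2)"
  define e4 where "e4 = nn_cond_exp M F (nnp g2)"
  have [measurable]: "e1 \<in> borel_measurable F" "e2 \<in> borel_measurable F" "e3 \<in> borel_measurable F" "e4 \<in> borel_measurable F"
    unfolding e1_def e2_def e3_def e4_def by auto
  define W where "W = (\<lambda>x. e1 x * e1 x + e2 x * e2 x + e3 x * e3 x + e4 x * e4 x)"
  have WF[measurable]: "W \<in> borel_measurable F" unfolding W_def by measurable
  have WM[measurable]: "W \<in> borel_measurable M" by (rule measurable_from_subalg[OF subalg WF])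
  have ce: "cond_exp_c M F g x = complex_of_real (enn2real (e1 x) - enn2real (e2 x)) + \<i> * complex_of_real (enn2real (e3 x) - enn2real (e4 x))" for x
    unfolding cond_exp_c_def rce_pp e1_def e2_def e3_def e4_def g1_def g2_def ..
  have pw: "ennreal ((cmod (cnj (u x) * cond_exp_c M F g x))\<^sup>2) \<le> ennreal ((cmod (u x))\<^sup>2) * (2 * W x)" for x
  proof -
    let ?r1 = "enn2real (e1 x)" and ?r2 = "enn2real (e2 x)" and ?r3 = "enn2real (e3 x)" and ?r4 = "enn2real (e4 x)"
    have "(cmod (cnj (u x) * cond_exp_c M F g x))\<^sup>2 = (cmod (u x))\<^sup>2 * ((?r1 - ?r2)\<^sup>2 + (?r3 - ?r4)\<^sup>2)"
      unfolding ce norm_mult power_mult_distrib complex_mod_cnj by (simp add: cmod_power2)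
    also have "\<dots> \<le> (cmod (u x))\<^sup>2 * (2 * (?r1\<^sup>2 + ?r2\<^sup>2) + 2 * (?r3\<^sup>2 + ?r4\<^sup>2))"
      by (intro mult_left_mono add_mono sq_diff_le) auto
    finally have le1: "ennreal ((cmod (cnj (u x) * cond_exp_c M F g x))\<^sup>2) \<le>
        ennreal ((cmod (u x))\<^sup>2 * (2 * (?r1\<^sup>2 + ?r2\<^sup>2 + ?r3\<^sup>2 + ?r4\<^sup>2)))"
      by (intro ennreal_leI) (simp add: algebra_simps)
    have "ennreal ((cmod (u x))\<^sup>2 * (2 * (?r1\<^sup>2 + ?r2\<^sup>2 + ?r3\<^sup>2 + ?r4\<^sup>2)))
       = ennreal ((cmod (u x))\<^sup>2) * ennreal (2 * (?r1\<^sup>2 + ?r2\<^sup>2 + ?r3\<^sup>2 + ?r4\<^sup>2))"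
      by (rule ennreal_mult) auto
    also have "ennreal (2 * (?r1\<^sup>2 + ?r2\<^sup>2 + ?r3\<^sup>2 + ?r4\<^sup>2))
       = 2 * (ennreal (?r1\<^sup>2) + ennreal (?r2\<^sup>2) + ennreal (?r3\<^sup>2) + ennreal (?r4\<^sup>2))"
      by (simp add: ennreal_mult ennreal_plus)
    finally have "ennreal ((cmod (cnj (u x) * cond_exp_c M F g x))\<^sup>2) \<le>
        ennreal ((cmod (u x))\<^sup>2) * (2 * (ennreal (?r1\<^sup>2) + ennreal (?r2\<^sup>2) + ennreal (?r3\<^sup>2) + ennreal (?r4\<^sup>2)))"
      using le1 by simp
    also have "\<dots> \<le> ennreal ((cmod (u x))\<^sup>2) * (2 * W x)"
      unfolding W_def by (intro mult_left_mono add_mono enn2real_sq_le) auto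
    finally show ?thesis .
  qed
  have mono_K: "\<And>x y. x \<le> y \<Longrightarrow> ennreal K * (2 * x) \<le> ennreal K * (2 * y)"
    by (intro mult_left_mono) auto
  have "(\<integral>\<^sup>+x. ennreal ((cmod (cnj (u x) * cond_exp_c M F g x))\<^sup>2) \<partial>M) \<le> (\<integral>\<^sup>+x. ennreal ((cmod (u x))\<^sup>2) * (2 * W x) \<partial>M)"
    by (rule nn_integral_mono) (rule pw)
  also have "\<dots> \<le> ennreal K * (\<integral>\<^sup>+x. 2 * W x \<partial>M)"
    by (rule u2int[OF assms(1) _ K]) measurable
  also have "(\<integral>\<^sup>+x. 2 * W x \<partial>M) = 2 * (\<integral>\<^sup>+x. W x \<partial>M)"
    by (rule nn_integral_cmult) auto
  also have "(\<integral>\<^sup>+x. W x \<partial>M) \<le> (\<integral>\<^sup>+x. nn_cond_exp M F (\<lambda>y. ennreal ((cmod (g y))\<^sup>2)) x \<partial>M)"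
  proof (rule nn_integral_mono_AE)
    have j1: "AE x in M. e1 x * e1 x \<le> nn_cond_exp M F (\<lambda>y. pp g1 y * pp g1 y) x" unfolding e1_def by (rule jensen) auto
    have j2: "AE x in M. e2 x * e2 x \<le> nn_cond_exp M F (\<lambda>y. nnp g1 y * nnp g1 y) x" unfolding e2_def by (rule jensen) auto
    have j3: "AE x in M. e3 x * e3 x \<le> nn_cond_exp M F (\<lambda>y. pp g2 y * pp g2 y) x" unfolding e3_def by (rule jensen) auto
    have j4: "AE x in M. e4 x * e4 x \<le> nn_cond_exp M F (\<lambda>y. nnp g2 y * nnp g2 y) x" unfolding e4_def by (rule jensen) auto
    have s1: "AE x in M. nn_cond_exp M F (\<lambda>y. pp g1 y * pp g1 y) x + nn_cond_exp M F (\<lambda>y. nnp g1 y * nnp g1 y) x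
        = nn_cond_exp M F (\<lambda>y. pp g1 y * pp g1 y + nnp g1 y * nnp g1 y) x"
      by (rule nn_cond_exp_sum) auto
    have s2: "AE x in M. nn_cond_exp M F (\<lambda>y. pp g2 y * pp g2 y) x + nn_cond_exp M F (\<lambda>y. nnp g2 y * nnp g2 y) x
        = nn_cond_exp M F (\<lambda>y. pp g2 y * pp g2 y + nnp g2 y * nnp g2 y) x"
      by (rule nn_cond_exp_sum) auto
    have s3: "AE x in M. nn_cond_exp M F (\<lambda>y. ennreal ((g1 y)\<^sup>2)) x + nn_cond_exp M F (\<lambda>y. ennreal ((g2 y)\<^sup>2)) x
        = nn_cond_exp M F (\<lambda>y. ennreal ((g1 y)\<^sup>2) + ennreal ((g2 y)\<^sup>2)) x"
      by (rule nn_cond_exp_sum) auto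
    have eqg: "(\<lambda>y. ennreal ((g1 y)\<^sup>2) + ennreal ((g2 y)\<^sup>2)) = (\<lambda>y. ennreal ((cmod (g y))\<^sup>2))"
      unfolding g1_def g2_def by (auto simp: cmod_power2 ennreal_plus[symmetric] simp del: ennreal_plus)
    show "AE x in M. W x \<le> nn_cond_exp M F (\<lambda>y. ennreal ((cmod (g y))\<^sup>2)) x"
      using j1 j2 j3 j4 s1 s2 s3 unfolding pp_sq eqg
    proof eventually_elim
      case (elim x)
      have "W x \<le> (nn_cond_exp M F (\<lambda>y. pp g1 y * pp g1 y) x + nn_cond_exp M F (\<lambda>y. nnp g1 y * nnp g1 y) x)
          + (nn_cond_exp M F (\<lambda>y. pp g2 y * pp g2 y) x + nn_cond_exp M F (\<lambda>y. nnp g2 y * nnp g2 y) x)"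
        unfolding W_def using elim(1-4) by (simp add: add_mono add.assoc)
      then show ?case using elim(5-7) by simp
    qed
  qed
  also have "(\<integral>\<^sup>+x. nn_cond_exp M F (\<lambda>y. ennreal ((cmod (g y))\<^sup>2)) x \<partial>M) = (\<integral>\<^sup>+x. ennreal ((cmod (g x))\<^sup>2) \<partial>M)"
    using nn_cond_exp_intg[of "\<lambda>_. 1" "\<lambda>y. ennreal ((cmod (g y))\<^sup>2)"] by simp
  finally have "(\<integral>\<^sup>+x. ennreal ((cmod (cnj (u x) * cond_exp_c M F g x))\<^sup>2) \<partial>M)
      \<le> ennreal K * (2 * (\<integral>\<^sup>+x. ennreal ((cmod (g x))\<^sup>2) \<partial>M))"
    using mono_K by blast
  moreover have "(\<integral>\<^sup>+x. ennreal ((cmod (g x))\<^sup>2) \<partial>M) < \<infinity>"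
    using gi by (simp add: integrable_iff_bounded)
  ultimately have "(\<integral>\<^sup>+x. ennreal ((cmod (cnj (u x) * cond_exp_c M F g x))\<^sup>2) \<partial>M) < \<infinity>"
    by (simp add: ennreal_mult_less_top le_less_trans)
  then have "integrable M (\<lambda>x. (cmod (cnj (u x) * cond_exp_c M F g x))\<^sup>2)"
    by (intro integrableI_nonneg) auto
  then show ?thesis unfolding L2_def by auto
qed

end

lemma Re_mult_cnj': "Re (z * cnj w) = Re z * Re w + Im z * Im w"
  and Im_mult_cnj': "Im (z * cnj w) = Im z * Re w - Re z * Im w"
  by (simp_all add: algebra_simps)

lemma integral_complex_split:
  assumes "integrable M z"
  shows "integral\<^sup>L M z = Complex (\<integral>x. Re (z x) \<partial>M) (\<integral>x. Im (z x) \<partial>M)"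
  using integral_bounded_linear[OF bounded_linear_Re assms] integral_bounded_linear[OF bounded_linear_Im assms]
  by (simp add: complex_eq_iff)

lemma L2prod:
  assumes "f1 \<in> L2 M" "f2 \<in> L2 M"
  shows "integrable M (\<lambda>x. cmod (f1 x) * cmod (f2 x))"
proof -
  have [measurable]: "f1 \<in> borel_measurable M" "f2 \<in> borel_measurable M" using assms unfolding L2_def by auto
  have "integrable M (\<lambda>x. (cmod (f1 x))\<^sup>2 + (cmod (f2 x))\<^sup>2)" using assms unfolding L2_def by auto
  then show ?thesis
  proof (rule Bochner_Integration.integrable_bound)
    show "AE x in M. norm (cmod (f1 x) * cmod (f2 x)) \<le> norm ((cmod (f1 x))\<^sup>2 + (cmod (f2 x))\<^sup>2)"
    proof (rule AE_I2)
      fix x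
      have "2 * (cmod (f1 x) * cmod (f2 x)) \<le> (cmod (f1 x))\<^sup>2 + (cmod (f2 x))\<^sup>2"
        using sum_squares_bound[of "cmod (f1 x)" "cmod (f2 x)"] by simp
      moreover have "0 \<le> cmod (f1 x) * cmod (f2 x)" by simp
      ultimately have "cmod (f1 x) * cmod (f2 x) \<le> (cmod (f1 x))\<^sup>2 + (cmod (f2 x))\<^sup>2" by linarith
      then show "norm (cmod (f1 x) * cmod (f2 x)) \<le> norm ((cmod (f1 x))\<^sup>2 + (cmod (f2 x))\<^sup>2)"
        by simp
    qed
  qed measurable
qed

lemma L2prod_bound:
  assumes "f1 \<in> L2 M" "f2 \<in> L2 M" "r \<in> borel_measurable M"
    and "\<And>x. \<bar>r x\<bar> \<le> cmod (f1 x) * cmod (f2 x)"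
  shows "integrable M r"
  using L2prod[OF assms(1,2)] assms(3)
  by (rule Bochner_Integration.integrable_bound) (use assms(4) in auto)

context sigma_finite_subalgebra
begin

lemma swap:
  assumes [measurable]: "\<phi> \<in> borel_measurable M" "ch \<in> borel_measurable M"
    and i1: "integrable M (\<lambda>x. ch x * real_cond_exp M F \<phi> x)"
    and i2: "integrable M (\<lambda>x. \<phi> x * real_cond_exp M F ch x)"
  shows "(\<integral>x. real_cond_exp M F \<phi> x * ch x \<partial>M) = (\<integral>x. \<phi> x * real_cond_exp M F ch x \<partial>M)"
proof -
  have "(\<integral>x. real_cond_exp M F ch x * real_cond_exp M F \<phi> x \<partial>M) = (\<integral>x. ch x * real_cond_exp M F \<phi> x \<partial>M)"
    by (rule tower(2)) (auto simp: i1)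
  moreover have "(\<integral>x. real_cond_exp M F \<phi> x * real_cond_exp M F ch x \<partial>M) = (\<integral>x. \<phi> x * real_cond_exp M F ch x \<partial>M)"
    by (rule tower(2)) (auto simp: i2)
  ultimately show ?thesis by (simp add: mult.commute)
qed

lemma adjoint:
  assumes [measurable]: "u \<in> borel_measurable M"
    and K: "\<And>n. AE x in M. nn_cond_exp M F (\<lambda>y. ennreal (gtr u n y)) x \<le> ennreal K"
    and f: "f \<in> L2 M" and g: "g \<in> L2 M" and Tf: "EM M F u f \<in> L2 M"
  shows "inner_L2 M (EM M F u f) g = inner_L2 M f (\<lambda>x. cnj (u x) * cond_exp_c M F g x)"
proof -
  define h where "h = (\<lambda>x. cnj (u x) * cond_exp_c M F g x)"
  have hL2: "h \<in> L2 M" unfolding h_def by (rule hL2[OF assms(1) K g])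
  have [measurable]: "f \<in> borel_measurable M" "g \<in> borel_measurable M" using f g unfolding L2_def by auto
  define uf where "uf = (\<lambda>x. u x * f x)"
  have [measurable]: "uf \<in> borel_measurable M" unfolding uf_def by measurable
  define Eg where "Eg = cond_exp_c M F g"
  have EgL: "\<And>x. cmod (h x) = cmod (u x) * cmod (Eg x)" unfolding h_def Eg_def by (simp add: norm_mult)
  define p where "p = (\<lambda>x. Re (uf x))"
  define q where "q = (\<lambda>x. Im (uf x))"
  define g1 where "g1 = (\<lambda>x. Re (g x))"
  define g2 where "g2 = (\<lambda>x. Im (g x))"
  have [measurable]: "p \<in> borel_measurable M" "q \<in> borel_measurable M" "g1 \<in> borel_measurable M" "g2 \<in> borel_measurable M"
    unfolding p_def q_def g1_def g2_def by auto
  have TfRe: "Re (EM M F u f x) = real_cond_exp M F p x" and TfIm: "Im (EM M F u f x) = real_cond_exp M F q x" for x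
    unfolding EM_def p_def q_def uf_def by (simp_all add: cond_exp_c_Re cond_exp_c_Im)
  have EgRe: "Re (Eg x) = real_cond_exp M F g1 x" and EgIm: "Im (Eg x) = real_cond_exp M F g2 x" for x
    unfolding Eg_def g1_def g2_def by (simp_all add: cond_exp_c_Re cond_exp_c_Im)
  have cmEg: "\<bar>Re (Eg x)\<bar> \<le> cmod (Eg x)" "\<bar>Im (Eg x)\<bar> \<le> cmod (Eg x)" for x by (auto simp: abs_Re_le_cmod abs_Im_le_cmod)
  have cmT: "\<bar>Re (EM M F u f x)\<bar> \<le> cmod (EM M F u f x)" "\<bar>Im (EM M F u f x)\<bar> \<le> cmod (EM M F u f x)" for x
    by (auto simp: abs_Re_le_cmod abs_Im_le_cmod)
  have cmuf: "\<bar>p x\<bar> \<le> cmod (u x) * cmod (f x)" "\<bar>q x\<bar> \<le> cmod (u x) * cmod (f x)" for x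
    unfolding p_def q_def uf_def norm_mult[symmetric] by (rule abs_Re_le_cmod, rule abs_Im_le_cmod)
  have cmg: "\<bar>g1 x\<bar> \<le> cmod (g x)" "\<bar>g2 x\<bar> \<le> cmod (g x)" for x
    unfolding g1_def g2_def by (auto simp: abs_Re_le_cmod abs_Im_le_cmod)
  have iA: "integrable M (\<lambda>x. ch x * real_cond_exp M F \<phi> x)"
    if "ch \<in> {g1, g2}" "\<phi> \<in> {p, q}" for ch \<phi>
  proof (rule L2prod_bound[OF g Tf])
    show "(\<lambda>x. ch x * real_cond_exp M F \<phi> x) \<in> borel_measurable M" using that by auto
    fix x
    have "\<bar>ch x\<bar> \<le> cmod (g x)" using that cmg by auto
    moreover have "\<bar>real_cond_exp M F \<phi> x\<bar> \<le> cmod (EM M F u f x)" using that cmT TfRe TfIm by auto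
    ultimately show "\<bar>ch x * real_cond_exp M F \<phi> x\<bar> \<le> cmod (g x) * cmod (EM M F u f x)"
      unfolding abs_mult by (rule mult_mono) auto
  qed
  have iB: "integrable M (\<lambda>x. \<phi> x * real_cond_exp M F ch x)"
    if "ch \<in> {g1, g2}" "\<phi> \<in> {p, q}" for ch \<phi>
  proof (rule L2prod_bound[OF f hL2])
    show "(\<lambda>x. \<phi> x * real_cond_exp M F ch x) \<in> borel_measurable M" using that by auto
    fix x
    have "\<bar>\<phi> x\<bar> \<le> cmod (u x) * cmod (f x)" using that cmuf by auto
    moreover have "\<bar>real_cond_exp M F ch x\<bar> \<le> cmod (Eg x)" using that cmEg EgRe EgIm by auto
    ultimately have "\<bar>\<phi> x * real_cond_exp M F ch x\<bar> \<le> (cmod (u x) * cmod (f x)) * cmod (Eg x)"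
      unfolding abs_mult by (rule mult_mono) auto
    then show "\<bar>\<phi> x * real_cond_exp M F ch x\<bar> \<le> cmod (f x) * cmod (h x)"
      unfolding EgL by (simp add: algebra_simps)
  qed
  have sw: "(\<integral>x. real_cond_exp M F \<phi> x * ch x \<partial>M) = (\<integral>x. \<phi> x * real_cond_exp M F ch x \<partial>M)"
    if "ch \<in> {g1, g2}" "\<phi> \<in> {p, q}" for ch \<phi>
    by (rule swap) (use that iA iB in auto)
  have iA': "integrable M (\<lambda>x. real_cond_exp M F \<phi> x * ch x)"
    if "ch \<in> {g1, g2}" "\<phi> \<in> {p, q}" for ch \<phi>
    using iA[OF that] by (simp add: mult.commute)
  have intL: "integrable M (\<lambda>x. EM M F u f x * cnj (g x))"
    by (rule Bochner_Integration.integrable_bound[OF L2prod[OF Tf g]]) (auto simp: norm_mult)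
  have intR: "integrable M (\<lambda>x. f x * cnj (h x))"
    by (rule Bochner_Integration.integrable_bound[OF L2prod[OF f hL2]]) (auto simp: norm_mult h_def)
  have ReL: "Re (EM M F u f x * cnj (g x)) = real_cond_exp M F p x * g1 x + real_cond_exp M F q x * g2 x"
    and ImL: "Im (EM M F u f x * cnj (g x)) = real_cond_exp M F q x * g1 x - real_cond_exp M F p x * g2 x" for x
    unfolding Re_mult_cnj' Im_mult_cnj' TfRe TfIm g1_def g2_def by simp_all
  have fh: "f x * cnj (h x) = uf x * cnj (Eg x)" for x unfolding h_def uf_def Eg_def by simp
  have ReR: "Re (f x * cnj (h x)) = p x * real_cond_exp M F g1 x + q x * real_cond_exp M F g2 x"
    and ImR: "Im (f x * cnj (h x)) = q x * real_cond_exp M F g1 x - p x * real_cond_exp M F g2 x" for x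
    unfolding fh Re_mult_cnj' Im_mult_cnj' EgRe EgIm p_def q_def by simp_all
  have "(\<integral>x. Re (EM M F u f x * cnj (g x)) \<partial>M) = (\<integral>x. Re (f x * cnj (h x)) \<partial>M)"
    unfolding ReL ReR
    using iA'[of g1 p] iA'[of g2 q] iB[of g1 p] iB[of g2 q] sw[of g1 p] sw[of g2 q] by simp
  moreover have "(\<integral>x. Im (EM M F u f x * cnj (g x)) \<partial>M) = (\<integral>x. Im (f x * cnj (h x)) \<partial>M)"
    unfolding ImL ImR
    using iA'[of g1 q] iA'[of g2 p] iB[of g1 q] iB[of g2 p] sw[of g1 q] sw[of g2 p] by simp
  ultimately show ?thesis
    unfolding inner_L2_def h_def[symmetric] integral_complex_split[OF intL] integral_complex_split[OF intR]
    by simp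
qed

end

context sigma_finite_subalgebra
begin

lemma supp_zero:
  assumes [measurable]: "\<psi> \<in> borel_measurable M" and Z: "Z \<in> sets F"
    and z: "\<And>x. x \<in> Z \<Longrightarrow> nn_cond_exp M F \<psi> x = 0"
  shows "AE x in M. x \<in> Z \<longrightarrow> \<psi> x = 0"
proof -
  have "(\<integral>\<^sup>+x. indicator Z x * \<psi> x \<partial>M) = (\<integral>\<^sup>+x. indicator Z x * nn_cond_exp M F \<psi> x \<partial>M)"
    by (rule E_int_ind[symmetric, OF Z]) auto
  also have "\<dots> = (\<integral>\<^sup>+x. 0 \<partial>M)"
    by (rule nn_integral_cong) (auto simp: z indicator_def)
  finally have "(\<integral>\<^sup>+x. indicator Z x * \<psi> x \<partial>M) = 0" by simp
  moreover have "(\<lambda>x. indicator Z x * \<psi> x) \<in> borel_measurable M"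
    using setF_M[OF Z] by measurable
  ultimately have "AE x in M. indicator Z x * \<psi> x = 0" by (simp add: nn_integral_0_iff_AE)
  then show ?thesis by eventually_elim (auto simp: indicator_def)
qed

lemma zero_supp:
  assumes [measurable]: "\<psi> \<in> borel_measurable M" and Z: "Z \<in> sets F"
    and z: "AE x in M. x \<in> Z \<longrightarrow> \<psi> x = 0"
  shows "AE x in M. x \<in> Z \<longrightarrow> nn_cond_exp M F \<psi> x = 0"
proof -
  have ZM[measurable]: "Z \<in> sets M" using setF_M[OF Z] .
  have "AE x in M. nn_cond_exp M F (\<lambda>y. indicator Z y * \<psi> y) x = 0"
    by (rule E_ae0) (use z in \<open>auto elim!: eventually_mono simp: indicator_def\<close>)
  with E_ind[OF Z assms(1)] show ?thesis by eventually_elim (auto simp: indicator_def)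
qed

lemma u_zero:
  assumes [measurable]: "u \<in> borel_measurable M"
  shows "AE x in M. nn_cond_exp M F (\<lambda>y. ennreal ((cmod (u y))\<^sup>2)) x = 0 \<longrightarrow> u x = 0"
proof -
  let ?E = "nn_cond_exp M F (\<lambda>y. ennreal ((cmod (u y))\<^sup>2))"
  define Z where "Z = {x \<in> space F. ?E x = 0}"
  have Z: "Z \<in> sets F" unfolding Z_def by measurable
  have "AE x in M. x \<in> Z \<longrightarrow> ennreal ((cmod (u x))\<^sup>2) = 0"
    by (rule supp_zero[OF _ Z]) (auto simp: Z_def)
  with AE_space show ?thesis
    by eventually_elim (auto simp: Z_def spF)
qed

lemma vanish_from_inv:
  assumes [measurable]: "u \<in> borel_measurable M" and C[measurable]: "C \<in> sets M"
    and fin: "AE x in M. nn_cond_exp M F (\<lambda>y. ennreal (cmod (u y))) x < \<infinity>"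
    and inv: "\<forall>f\<in>L2_on M C. EM M F u f \<in> L2_on M C"
  shows "AE x in M. x \<notin> C \<longrightarrow> nn_cond_exp M F (\<lambda>y. indicator C y * ennreal (gtr u n y)) x = 0"
proof -
  obtain B :: "nat \<Rightarrow> 'a set" where B: "\<And>k. B k \<in> sets F" "\<And>k. emeasure M (B k) < \<infinity>" "(\<Union>k. B k) = space M"
    using exhaust by metis
  let ?e = "nn_cond_exp M F (\<lambda>y. indicator C y * ennreal (gtr u n y))"
  have efin: "AE x in M. ?e x < \<infinity>"
  proof (rule E_fin[OF assms(1) _ fin])
    fix x
    have "indicator C x * ennreal (gtr u n x) \<le> ennreal (gtr u n x)" by (auto simp: indicator_def)
    also have "\<dots> \<le> ennreal (real n) * ennreal (cmod (u x))"
      by (subst ennreal_mult[symmetric]) (auto intro!: ennreal_leI gtr_le)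
    finally show "indicator C x * ennreal (gtr u n x) \<le> ennreal (real n) * ennreal (cmod (u x))" .
  qed measurable
  show ?thesis
  proof (rule AE_exhaust[OF B(1) B(3)])
    fix k
    note Tc = Tcomp[OF assms(1) C B(1)[of k] B(2)[of k], of n]
    have "ftr u (C \<inter> B k) n \<in> L2_on M C"
      using Tc(1) unfolding L2_on_def by (auto simp: ftr_def)
    with inv have "EM M F u (ftr u (C \<inter> B k) n) \<in> L2_on M C" by auto
    then have v: "AE x in M. x \<notin> C \<longrightarrow> EM M F u (ftr u (C \<inter> B k) n) x = 0" unfolding L2_on_def by auto
    have fe: "(\<lambda>y. ennreal (indicator (C \<inter> B k) y * gtr u n y)) = (\<lambda>y. indicator (B k) y * (indicator C y * ennreal (gtr u n y)))"
      by (auto simp: indicator_def)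
    have pr: "AE x in M. nn_cond_exp M F (\<lambda>y. indicator (B k) y * (indicator C y * ennreal (gtr u n y))) x = indicator (B k) x * ?e x"
      by (rule E_ind[OF B(1)]) auto
    from v Tc(2) pr efin show "AE x in M. x \<in> B k \<longrightarrow> x \<notin> C \<longrightarrow> ?e x = 0"
      unfolding fe
    proof eventually_elim
      case (elim x)
      show ?case
      proof (intro impI)
        assume "x \<in> B k" "x \<notin> C"
        then have "enn2real (?e x) = 0" using elim(1-3) by simp
        then show "?e x = 0" using elim(4) by (auto simp: enn2real_eq_0_iff)
      qed
    qed
  qed
qed

end

context sigma_finite_subalgebra
begin

lemma L1:
  assumes [measurable]: "u \<in> borel_measurable M" "A \<in> sets M" "\<psi> \<in> borel_measurable M"
    and cond: "AE x in M. nn_cond_exp M F (\<lambda>y. ennreal ((cmod (u y))\<^sup>2)) x \<noteq> 0 \<longrightarrow>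
        nn_cond_exp M F (\<lambda>y. ennreal (indicator A y)) x = ennreal (indicator A x)"
    and van: "AE x in M. x \<notin> A \<longrightarrow> \<psi> x = 0"
  shows "AE x in M. nn_cond_exp M F (\<lambda>y. ennreal ((cmod (u y))\<^sup>2)) x \<noteq> 0 \<and> x \<notin> A \<longrightarrow> nn_cond_exp M F \<psi> x = 0"
proof -
  let ?E = "nn_cond_exp M F (\<lambda>y. ennreal ((cmod (u y))\<^sup>2))"
  let ?a = "nn_cond_exp M F (\<lambda>y. ennreal (indicator A y))"
  define S where "S = {x \<in> space F. ?E x \<noteq> 0}"
  define G where "G = {x \<in> space F. ?a x = 1 \<and> ?E x \<noteq> 0}"
  have SF: "S \<in> sets F" unfolding S_def by measurable
  have GF: "G \<in> sets F" unfolding G_def by measurable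
  have [measurable]: "S \<in> sets M" "G \<in> sets M" using SF GF setF_M by auto
  have "AE x in M. indicator S x * \<psi> x = indicator G x * \<psi> x"
    using cond van AE_space
  proof eventually_elim
    case (elim x)
    show ?case
    proof (cases "x \<in> S")
      case True
      then have "?E x \<noteq> 0" unfolding S_def by auto
      then have ax: "?a x = ennreal (indicator A x)" using elim by auto
      show ?thesis
      proof (cases "x \<in> A")
        case True
        then have "x \<in> G" using ax \<open>?E x \<noteq> 0\<close> elim(3) unfolding G_def by (simp add: spF)
        then show ?thesis using \<open>x \<in> S\<close> by simp
      next
        case False
        then show ?thesis using elim(2) by simp
      qed
    next
      case False
      then have "x \<notin> G" unfolding S_def G_def by auto
      then show ?thesis using False by simp
    qed
  qed
  then have "AE x in M. nn_cond_exp M F (\<lambda>y. indicator S y * \<psi> y) x = nn_cond_exp M F (\<lambda>y. indicator G y * \<psi> y) x"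
    by (intro nn_cond_exp_cong) auto
  from this E_ind[OF SF assms(3)] E_ind[OF GF assms(3)] cond AE_space
  show ?thesis
  proof eventually_elim
    case (elim x)
    show ?case
    proof
      assume h: "?E x \<noteq> 0 \<and> x \<notin> A"
      then have "x \<in> S" using elim(5) unfolding S_def by (simp add: spF)
      moreover have "x \<notin> G" using h elim(4) unfolding G_def by auto
      ultimately show "nn_cond_exp M F \<psi> x = 0" using elim(1-3) by simp
    qed
  qed
qed

lemma L0:
  assumes [measurable]: "u \<in> borel_measurable M" "A \<in> sets M" "\<psi> \<in> borel_measurable M"
    and cond: "AE x in M. nn_cond_exp M F (\<lambda>y. ennreal ((cmod (u y))\<^sup>2)) x \<noteq> 0 \<longrightarrow>
        nn_cond_exp M F (\<lambda>y. ennreal (indicator A y)) x = ennreal (indicator A x)"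
    and van: "AE x in M. x \<notin> A \<longrightarrow> \<psi> x = 0"
    and vanu: "AE x in M. u x = 0 \<longrightarrow> \<psi> x = 0"
  shows "AE x in M. x \<notin> A \<longrightarrow> nn_cond_exp M F \<psi> x = 0"
proof -
  let ?E = "nn_cond_exp M F (\<lambda>y. ennreal ((cmod (u y))\<^sup>2))"
  define Z where "Z = {x \<in> space F. ?E x = 0}"
  have ZF: "Z \<in> sets F" unfolding Z_def by measurable
  have "AE x in M. x \<in> Z \<longrightarrow> \<psi> x = 0"
    using u_zero[OF assms(1)] vanu by eventually_elim (auto simp: Z_def)
  from zero_supp[OF assms(3) ZF this] L1[OF assms(1-3) cond van] AE_space
  show ?thesis
    by eventually_elim (auto simp: Z_def spF)
qed

end

lemma cond_exp_c_pp: "cond_exp_c M F g x =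
   complex_of_real (enn2real (nn_cond_exp M F (pp (\<lambda>y. Re (g y))) x) - enn2real (nn_cond_exp M F (nnp (\<lambda>y. Re (g y))) x))
   + \<i> * complex_of_real (enn2real (nn_cond_exp M F (pp (\<lambda>y. Im (g y))) x) - enn2real (nn_cond_exp M F (nnp (\<lambda>y. Im (g y))) x))"
  unfolding cond_exp_c_def rce_pp ..

context sigma_finite_subalgebra
begin

lemma backward:
  assumes [measurable]: "u \<in> borel_measurable M" "A \<in> sets M"
    and K: "\<And>n. AE x in M. nn_cond_exp M F (\<lambda>y. ennreal (gtr u n y)) x \<le> ennreal K"
    and bd: "bounded_on_L2 M (EM M F u)"
    and cond: "AE x in M. nn_cond_exp M F (\<lambda>y. ennreal ((cmod (u y))\<^sup>2)) x \<noteq> 0 \<longrightarrow>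
        nn_cond_exp M F (\<lambda>y. ennreal (indicator A y)) x = ennreal (indicator A x)"
  shows "reduces M (L2_on M A) (EM M F u)"
proof -
  have bdT: "\<And>f. f \<in> L2 M \<Longrightarrow> EM M F u f \<in> L2 M" using bd unfolding bounded_on_L2_def by blast
  have inv: "\<forall>f\<in>L2_on M A. EM M F u f \<in> L2_on M A"
  proof
    fix f assume f: "f \<in> L2_on M A"
    then have fL: "f \<in> L2 M" and fv: "AE x in M. x \<notin> A \<longrightarrow> f x = 0" unfolding L2_on_def by auto
    have fm[measurable]: "f \<in> borel_measurable M" using fL unfolding L2_def by auto
    define p where "p = (\<lambda>y. Re (u y * f y))"
    define q where "q = (\<lambda>y. Im (u y * f y))"
    have [measurable]: "p \<in> borel_measurable M" "q \<in> borel_measurable M" unfolding p_def q_def by auto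
    have van: "AE x in M. x \<notin> A \<longrightarrow> nn_cond_exp M F (\<psi> r) x = 0"
      if "\<psi> \<in> {pp, nnp}" "r \<in> {p, q}" for \<psi> r
    proof (rule L0[OF assms(1,2) _ cond])
      show "\<psi> r \<in> borel_measurable M" using that by auto
      show "AE x in M. x \<notin> A \<longrightarrow> \<psi> r x = 0"
        using fv by eventually_elim (use that in \<open>auto simp: pp_def nnp_def p_def q_def\<close>)
      show "AE x in M. u x = 0 \<longrightarrow> \<psi> r x = 0"
        using that by (auto simp: pp_def nnp_def p_def q_def)
    qed
    have "AE x in M. x \<notin> A \<longrightarrow> EM M F u f x = 0"
      using van[of pp p, simplified] van[of nnp p, simplified] van[of pp q, simplified] van[of nnp q, simplified]
      by eventually_elim (simp add: EM_def cond_exp_c_pp p_def q_def)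
    then show "EM M F u f \<in> L2_on M A" unfolding L2_on_def using bdT[OF fL] by auto
  qed
  have adj: "\<forall>g\<in>L2_on M A. \<exists>h\<in>L2_on M A. \<forall>f\<in>L2 M. inner_L2 M (EM M F u f) g = inner_L2 M f h"
  proof
    fix g assume g: "g \<in> L2_on M A"
    then have gL: "g \<in> L2 M" and gv: "AE x in M. x \<notin> A \<longrightarrow> g x = 0" unfolding L2_on_def by auto
    have gm[measurable]: "g \<in> borel_measurable M" using gL unfolding L2_def by auto
    define h where "h = (\<lambda>x. cnj (u x) * cond_exp_c M F g x)"
    have hL: "h \<in> L2 M" unfolding h_def by (rule hL2[OF assms(1) K gL])
    define g1 where "g1 = (\<lambda>y. Re (g y))"
    define g2 where "g2 = (\<lambda>y. Im (g y))"
    have [measurable]: "g1 \<in> borel_measurable M" "g2 \<in> borel_measurable M" unfolding g1_def g2_def by auto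
    have van: "AE x in M. nn_cond_exp M F (\<lambda>y. ennreal ((cmod (u y))\<^sup>2)) x \<noteq> 0 \<and> x \<notin> A \<longrightarrow> nn_cond_exp M F (\<psi> r) x = 0"
      if "\<psi> \<in> {pp, nnp}" "r \<in> {g1, g2}" for \<psi> r
    proof (rule L1[OF assms(1,2) _ cond])
      show "\<psi> r \<in> borel_measurable M" using that by auto
      show "AE x in M. x \<notin> A \<longrightarrow> \<psi> r x = 0"
        using gv by eventually_elim (use that in \<open>auto simp: pp_def nnp_def g1_def g2_def\<close>)
    qed
    have "AE x in M. x \<notin> A \<longrightarrow> h x = 0"
      using van[of pp g1, simplified] van[of nnp g1, simplified] van[of pp g2, simplified] van[of nnp g2, simplified] u_zero[OF assms(1)]
    proof eventually_elim
      case (elim x)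
      show ?case
      proof
        assume xA: "x \<notin> A"
        show "h x = 0"
        proof (cases "u x = 0")
          case True then show ?thesis unfolding h_def by simp
        next
          case False
          then have "nn_cond_exp M F (\<lambda>y. ennreal ((cmod (u y))\<^sup>2)) x \<noteq> 0" using elim(5) by auto
          then show ?thesis using elim(1-4) xA unfolding h_def cond_exp_c_pp g1_def g2_def by simp
        qed
      qed
    qed
    then have hA: "h \<in> L2_on M A" unfolding L2_on_def using hL by auto
    have "\<forall>f\<in>L2 M. inner_L2 M (EM M F u f) g = inner_L2 M f h"
      unfolding h_def using adjoint[OF assms(1) K _ gL bdT] by blast
    with hA show "\<exists>h\<in>L2_on M A. \<forall>f\<in>L2 M. inner_L2 M (EM M F u f) g = inner_L2 M f h" by blast
  qed
  show ?thesis unfolding reduces_def using inv adj by blast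
qed

end

context sigma_finite_subalgebra
begin

lemma inv_compl:
  assumes [measurable]: "A \<in> sets M"
    and bd: "bounded_on_L2 M (EM M F u)"
    and red: "reduces M (L2_on M A) (EM M F u)"
  shows "\<forall>f\<in>L2_on M (space M - A). EM M F u f \<in> L2_on M (space M - A)"
proof
  fix f assume f: "f \<in> L2_on M (space M - A)"
  then have fL: "f \<in> L2 M" and fv: "AE x in M. x \<notin> space M - A \<longrightarrow> f x = 0" unfolding L2_on_def by auto
  have TL: "EM M F u f \<in> L2 M" using bd fL unfolding bounded_on_L2_def by blast
  define T where "T = EM M F u f"
  have [measurable]: "T \<in> borel_measurable M" unfolding T_def by simp
  define g where "g = (\<lambda>x. indicator A x * T x)"
  have [measurable]: "g \<in> borel_measurable M" unfolding g_def by measurable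
  have Ti: "integrable M (\<lambda>x. (cmod (T x))\<^sup>2)" using TL unfolding L2_def T_def by auto
  have gi: "integrable M (\<lambda>x. (cmod (g x))\<^sup>2)"
    by (rule Bochner_Integration.integrable_bound[OF Ti]) (auto simp: g_def indicator_def)
  have gA: "g \<in> L2_on M A" unfolding L2_on_def L2_def using gi by (auto simp: g_def)
  with red obtain h where hA: "h \<in> L2_on M A" and hh: "\<forall>f\<in>L2 M. inner_L2 M (EM M F u f) g = inner_L2 M f h"
    unfolding reduces_def by blast
  have "inner_L2 M T g = inner_L2 M f h" using hh fL unfolding T_def by blast
  also have "\<dots> = 0"
  proof -
    have hv: "AE x in M. x \<notin> A \<longrightarrow> h x = 0" using hA unfolding L2_on_def by auto
    have "AE x in M. f x * cnj (h x) = 0" using fv hv AE_space by eventually_elim auto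
    then have "inner_L2 M f h = (\<integral>x. 0 \<partial>M)" unfolding inner_L2_def by (rule integral_cong_AE[rotated 2]) (use fL hA in \<open>auto simp: L2_def L2_on_def\<close>)
    then show ?thesis by simp
  qed
  finally have 0: "inner_L2 M T g = 0" .
  have "inner_L2 M T g = complex_of_real (\<integral>x. indicator A x * (cmod (T x))\<^sup>2 \<partial>M)"
    unfolding inner_L2_def integral_complex_of_real[symmetric]
    by (rule Bochner_Integration.integral_cong) (auto simp: g_def indicator_def simp flip: complex_norm_square)
  with 0 have I: "(\<integral>x. indicator A x * (cmod (T x))\<^sup>2 \<partial>M) = 0" by simp
  have "integrable M (\<lambda>x. indicator A x * (cmod (T x))\<^sup>2)"
    by (rule Bochner_Integration.integrable_bound[OF Ti]) (auto simp: indicator_def)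
  from integral_nonneg_eq_0_iff_AE[OF this] I have "AE x in M. indicator A x * (cmod (T x))\<^sup>2 = 0"
    by simp
  then have "AE x in M. x \<notin> space M - A \<longrightarrow> T x = 0"
    using AE_space by eventually_elim (auto simp: indicator_def)
  then show "EM M F u f \<in> L2_on M (space M - A)" using TL unfolding L2_on_def T_def by auto
qed

end

context sigma_finite_subalgebra
begin

lemma supp_zero':
  assumes [measurable]: "\<psi> \<in> borel_measurable M" and Z: "Z \<in> sets F"
    and z: "AE x in M. x \<in> Z \<longrightarrow> nn_cond_exp M F \<psi> x = 0"
  shows "AE x in M. x \<in> Z \<longrightarrow> \<psi> x = 0"
proof -
  have "(\<integral>\<^sup>+x. indicator Z x * \<psi> x \<partial>M) = (\<integral>\<^sup>+x. indicator Z x * nn_cond_exp M F \<psi> x \<partial>M)"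
    by (rule E_int_ind[symmetric, OF Z]) auto
  also have "\<dots> = (\<integral>\<^sup>+x. 0 \<partial>M)"
    by (rule nn_integral_cong_AE) (use z in \<open>auto simp: indicator_def elim!: eventually_mono\<close>)
  finally have "(\<integral>\<^sup>+x. indicator Z x * \<psi> x \<partial>M) = 0" by simp
  moreover have "(\<lambda>x. indicator Z x * \<psi> x) \<in> borel_measurable M"
    using setF_M[OF Z] by measurable
  ultimately have "AE x in M. indicator Z x * \<psi> x = 0" by (simp add: nn_integral_0_iff_AE)
  then show ?thesis by eventually_elim (auto simp: indicator_def)
qed

lemma forward:
  assumes [measurable]: "u \<in> borel_measurable M" "A \<in> sets M"
    and fin: "AE x in M. nn_cond_exp M F (\<lambda>y. ennreal (cmod (u y))) x < \<infinity>"
    and bd: "bounded_on_L2 M (EM M F u)"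
    and red: "reduces M (L2_on M A) (EM M F u)"
  shows "AE x in M. nn_cond_exp M F (\<lambda>y. ennreal ((cmod (u y))\<^sup>2)) x \<noteq> 0 \<longrightarrow>
        nn_cond_exp M F (\<lambda>y. ennreal (indicator A y)) x = ennreal (indicator A x)"
proof -
  have AcM[measurable]: "space M - A \<in> sets M" by auto
  have inv1: "\<forall>f\<in>L2_on M A. EM M F u f \<in> L2_on M A" using red unfolding reduces_def by blast
  have inv2: "\<forall>f\<in>L2_on M (space M - A). EM M F u f \<in> L2_on M (space M - A)"
    by (rule inv_compl[OF assms(2) bd red])
  define pn where "pn n = nn_cond_exp M F (\<lambda>y. indicator A y * ennreal (gtr u n y))" for n
  define qn where "qn n = nn_cond_exp M F (\<lambda>y. indicator (space M - A) y * ennreal (gtr u n y))" for n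
  have pnF[measurable]: "pn n \<in> borel_measurable F" "qn n \<in> borel_measurable F" for n
    unfolding pn_def qn_def by auto
  have pnM[measurable]: "pn n \<in> borel_measurable M" "qn n \<in> borel_measurable M" for n
    unfolding pn_def qn_def by auto
  have R1: "AE x in M. x \<notin> A \<longrightarrow> pn n x = 0" for n
    unfolding pn_def by (rule vanish_from_inv[OF assms(1,2) fin inv1])
  have R2: "AE x in M. x \<notin> space M - A \<longrightarrow> qn n x = 0" for n
    unfolding qn_def by (rule vanish_from_inv[OF assms(1) AcM fin inv2])
  define a where "a = nn_cond_exp M F (\<lambda>y. ennreal (indicator A y))"
  define b where "b = nn_cond_exp M F (\<lambda>y. ennreal (indicator (space M - A) y))"
  have aF[measurable]: "a \<in> borel_measurable F" "b \<in> borel_measurable F" unfolding a_def b_def by auto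
  have aM[measurable]: "a \<in> borel_measurable M" "b \<in> borel_measurable M" unfolding a_def b_def by auto
  have ab: "AE x in M. a x + b x = 1"
  proof -
    have 1: "AE x in M. a x + b x = nn_cond_exp M F (\<lambda>y. ennreal (indicator A y) + ennreal (indicator (space M - A) y)) x"
      unfolding a_def b_def by (rule nn_cond_exp_sum) auto
    have 2: "AE x in M. nn_cond_exp M F (\<lambda>y. ennreal (indicator A y) + ennreal (indicator (space M - A) y)) x
        = nn_cond_exp M F (\<lambda>y. 1) x"
      by (rule nn_cond_exp_cong) (use AE_space in \<open>auto elim!: eventually_mono simp: indicator_def\<close>)
    from 1 2 E_const[of 1] show ?thesis by eventually_elim simp
  qed
  have i: "AE x in M. pn n x * b x = 0" for n
  proof -
    have 1: "AE x in M. pn n x * b x = nn_cond_exp M F (\<lambda>y. pn n y * ennreal (indicator (space M - A) y)) x"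
      unfolding b_def by (rule nn_cond_exp_prod) auto
    have 2: "AE x in M. nn_cond_exp M F (\<lambda>y. pn n y * ennreal (indicator (space M - A) y)) x = 0"
      by (rule E_ae0) (use R1[of n] in \<open>auto elim!: eventually_mono simp: indicator_def\<close>)
    from 1 2 show ?thesis by eventually_elim simp
  qed
  have ii: "AE x in M. qn n x * a x = 0" for n
  proof -
    have 1: "AE x in M. qn n x * a x = nn_cond_exp M F (\<lambda>y. qn n y * ennreal (indicator A y)) x"
      unfolding a_def by (rule nn_cond_exp_prod) auto
    have 2: "AE x in M. nn_cond_exp M F (\<lambda>y. qn n y * ennreal (indicator A y)) x = 0"
      by (rule E_ae0) (use R2[of n] AE_space in \<open>auto elim!: eventually_mono simp: indicator_def\<close>)
    from 1 2 show ?thesis by eventually_elim simp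
  qed
  have iv: "AE x in M. pn n x + qn n x = nn_cond_exp M F (\<lambda>y. ennreal (gtr u n y)) x" for n
  proof -
    have 1: "AE x in M. pn n x + qn n x = nn_cond_exp M F (\<lambda>y. indicator A y * ennreal (gtr u n y) + indicator (space M - A) y * ennreal (gtr u n y)) x"
      unfolding pn_def qn_def by (rule nn_cond_exp_sum) auto
    have 2: "AE x in M. nn_cond_exp M F (\<lambda>y. indicator A y * ennreal (gtr u n y) + indicator (space M - A) y * ennreal (gtr u n y)) x
        = nn_cond_exp M F (\<lambda>y. ennreal (gtr u n y)) x"
      by (rule nn_cond_exp_cong) (use AE_space in \<open>auto elim!: eventually_mono simp: indicator_def\<close>)
    from 1 2 show ?thesis by eventually_elim simp
  qed
  have v: "AE x in M. nn_cond_exp M F (\<lambda>y. ennreal ((cmod (u y))\<^sup>2)) x \<noteq> 0 \<longrightarrow>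
      (\<exists>n. nn_cond_exp M F (\<lambda>y. ennreal (gtr u n y)) x \<noteq> 0)"
  proof -
    define Z where "Z = {x \<in> space F. \<forall>n. nn_cond_exp M F (\<lambda>y. ennreal (gtr u n y)) x = 0}"
    have ZF: "Z \<in> sets F" unfolding Z_def by measurable
    have "AE x in M. x \<in> Z \<longrightarrow> ennreal (gtr u n x) = 0" for n
      by (rule supp_zero[OF _ ZF]) (auto simp: Z_def)
    then have "AE x in M. \<forall>n. x \<in> Z \<longrightarrow> ennreal (gtr u n x) = 0"
      by (subst AE_all_countable) auto
    then have "AE x in M. x \<in> Z \<longrightarrow> ennreal ((cmod (u x))\<^sup>2) = 0"
    proof eventually_elim
      case (elim x)
      have "gtr u (nat \<lceil>cmod (u x)\<rceil>) x = (cmod (u x))\<^sup>2" unfolding gtr_def by (simp add: real_nat_ceiling_ge)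
      then show ?case using elim[rule_format, of "nat \<lceil>cmod (u x)\<rceil>"] by simp
    qed
    moreover have m: "(\<lambda>x. ennreal ((cmod (u x))\<^sup>2)) \<in> borel_measurable M" by measurable
    ultimately have "AE x in M. x \<in> Z \<longrightarrow> nn_cond_exp M F (\<lambda>x. ennreal ((cmod (u x))\<^sup>2)) x = 0"
      using zero_supp[OF _ ZF] by blast
    with AE_space show ?thesis
      by eventually_elim (auto simp: Z_def spF)
  qed
  define Cs where "Cs = {x \<in> space F. a x = 1}"
  define Ds where "Ds = {x \<in> space F. a x = 0}"
  have CF: "Cs \<in> sets F" and DF: "Ds \<in> sets F" unfolding Cs_def Ds_def by measurable
  have vi1: "AE x in M. x \<in> Cs \<longrightarrow> x \<in> A"
  proof -
    have c1: "AE x in M. x \<in> Cs \<longrightarrow> b x = 0"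
      using ab
    proof eventually_elim
      case (elim x)
      show ?case
      proof
        assume "x \<in> Cs"
        then have "a x = 1" by (simp add: Cs_def)
        with elim have "1 + b x = 1 + 0" by simp
        then show "b x = 0" unfolding ennreal_add_left_cancel by simp
      qed
    qed
    have "AE x in M. x \<in> Cs \<longrightarrow> ennreal (indicator (space M - A) x) = 0"
      by (rule supp_zero'[OF _ CF c1[unfolded b_def]]) measurable
    with AE_space show ?thesis by eventually_elim (auto simp: indicator_def)
  qed
  have vi2: "AE x in M. x \<in> Ds \<longrightarrow> x \<notin> A"
  proof -
    have d1: "AE x in M. x \<in> Ds \<longrightarrow> a x = 0" by (rule AE_I2) (simp add: Ds_def)
    have "AE x in M. x \<in> Ds \<longrightarrow> ennreal (indicator A x) = 0"
      by (rule supp_zero'[OF _ DF d1[unfolded a_def]]) measurable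
    then show ?thesis by eventually_elim (auto simp: indicator_def)
  qed
  have iall: "AE x in M. \<forall>n. pn n x * b x = 0" by (subst AE_all_countable) (use i in auto)
  have iiall: "AE x in M. \<forall>n. qn n x * a x = 0" by (subst AE_all_countable) (use ii in auto)
  have ivall: "AE x in M. \<forall>n. pn n x + qn n x = nn_cond_exp M F (\<lambda>y. ennreal (gtr u n y)) x"
    by (subst AE_all_countable) (use iv in auto)
  from iall iiall ivall v ab vi1 vi2 AE_space show ?thesis
    unfolding a_def[symmetric]
  proof eventually_elim
    case (elim x)
    show ?case
    proof
      assume "nn_cond_exp M F (\<lambda>y. ennreal ((cmod (u y))\<^sup>2)) x \<noteq> 0"
      then obtain n where "nn_cond_exp M F (\<lambda>y. ennreal (gtr u n y)) x \<noteq> 0" using elim(4) by auto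
      then have "pn n x \<noteq> 0 \<or> qn n x \<noteq> 0" using elim(3) by (metis add.right_neutral)
      then show "a x = ennreal (indicator A x)"
      proof
        assume "pn n x \<noteq> 0"
        then have "b x = 0" using elim(1) by (auto simp: mult_eq_0_iff)
        then have "a x = 1" using elim(5) by simp
        then have "x \<in> Cs" using elim(8) by (simp add: Cs_def spF)
        then have "x \<in> A" using elim(6) by simp
        then show ?thesis using \<open>a x = 1\<close> by simp
      next
        assume "qn n x \<noteq> 0"
        then have "a x = 0" using elim(2) by (auto simp: mult_eq_0_iff)
        then have "x \<in> Ds" using elim(8) by (simp add: Ds_def spF)
        then have "x \<notin> A" using elim(7) by simp
        then show ?thesis using \<open>a x = 0\<close> by simp
      qed
    qed
  qed
qed

end

theorem theorem2p3:
  fixes M F :: "'a measure" and u :: "'a \<Rightarrow> complex" and A :: "'a set"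
  assumes "complete_measure M"
    and "sigma_finite_measure M"
    and "sigma_finite_subalgebra M F"
    and "u \<in> borel_measurable M"
    and "AE x in M. nn_cond_exp M F (\<lambda>y. ennreal (cmod (u y))) x < \<infinity>"
    and "bounded_on_L2 M (EM M F u)"
    and "A \<in> sets M"
  shows "reduces M (L2_on M A) (EM M F u) \<longleftrightarrow>
    (AE x in M. nn_cond_exp M F (\<lambda>y. ennreal ((cmod (u y))\<^sup>2)) x \<noteq> 0 \<longrightarrow>
        nn_cond_exp M F (\<lambda>y. ennreal (indicator A y)) x = ennreal (indicator A x))"
proof -
  interpret sigma_finite_subalgebra M F by (rule assms(3))
  obtain K :: real where K: "0 \<le> K" "\<And>n. AE x in M. nn_cond_exp M F (\<lambda>y. ennreal (gtr u n y)) x \<le> ennreal K"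
    using Ebound[OF assms(4) assms(5) assms(6)] by blast
  show ?thesis
  proof
    assume "reduces M (L2_on M A) (EM M F u)"
    then show "AE x in M. nn_cond_exp M F (\<lambda>y. ennreal ((cmod (u y))\<^sup>2)) x \<noteq> 0 \<longrightarrow>
        nn_cond_exp M F (\<lambda>y. ennreal (indicator A y)) x = ennreal (indicator A x)"
      by (rule forward[OF assms(4) assms(7) assms(5) assms(6)])
  next
    assume "AE x in M. nn_cond_exp M F (\<lambda>y. ennreal ((cmod (u y))\<^sup>2)) x \<noteq> 0 \<longrightarrow>
        nn_cond_exp M F (\<lambda>y. ennreal (indicator A y)) x = ennreal (indicator A x)"
    then show "reduces M (L2_on M A) (EM M F u)"
      by (rule backward[OF assms(4) assms(7) K(2) assms(6)])
  qed
qed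

end
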